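(* Let $(G,\tau)$ be a Hausdorff topological group. (i) If $(G,\tau)$ is metrizable and compact, then $(G,\mathcal{S}_\tau)$ is $b$-bounded. (ii) If $(G,\tau)$ is countably infinite and metrizable, then $(G,\mathcal{S}_\tau)$ is not $b$-bounded.
   Context: $\mathcal{S}_\tau$ is the smallest group ideal on $G$ containing every set $\{x\}\cup\{x_n:n\in\omega\}$ with $x_n\to x$ in $(G,\tau)$. A group ideal on $G$ is a family of subsets containing all finite subsets, closed under subsets and under $(A,B)\mapsto AB^{-1}$; it defines the coarse structure on $G$ with base $\{\{(x,y):x\in Ay\}:A\in\mathcal{I}\}$, and the bounded subsets of $(G,\mathcal{I})$ are exactly the members of $\mathcal{I}$. A function $f:(X,\mathcal{E})\to\mathbb{R}$ is bornologous if $f(B)$ is bounded in $\mathbb{R}$ for every bounded subset $B$ of $X$. A coarse space is $b$-bounded if every bornologous function on it is bounded. *)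

theory Defs
  imports "HOL-Analysis.Analysis"
begin

text \<open>Groups are written additively (type class group_add, not necessarily
commutative); the multiplicative set A B^{-1} becomes {a - b}.\<close>

definition group_ideal :: "('a::group_add) set set \<Rightarrow> bool" where
  "group_ideal I \<longleftrightarrow>
     (\<forall>F. finite F \<longrightarrow> F \<in> I) \<and>
     (\<forall>A\<in>I. \<forall>B. B \<subseteq> A \<longrightarrow> B \<in> I) \<and>
     (\<forall>A\<in>I. \<forall>B\<in>I. {a - b | a b. a \<in> A \<and> b \<in> B} \<in> I)"

definition S_tau :: "('a::{group_add,topological_space}) set set" where
  "S_tau = \<Inter>{I. group_ideal I \<and>
       (\<forall>x (xs::nat \<Rightarrow> 'a). xs \<longlonglongrightarrow> x \<longrightarrow> insert x (range xs) \<in> I)}"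

text \<open>Entourages of the coarse structure defined by a group ideal: subsets of
the base sets {(x,y). x \<in> A y} = {(x,y). x - y \<in> A}, A \<in> I.\<close>
definition ideal_entourage :: "('a::group_add) set set \<Rightarrow> ('a \<times> 'a) set \<Rightarrow> bool" where
  "ideal_entourage I E \<longleftrightarrow> (\<exists>A\<in>I. E \<subseteq> {(x,y). \<exists>a\<in>A. x = a + y})"

definition coarse_bounded :: "('a::group_add) set set \<Rightarrow> 'a set \<Rightarrow> bool" where
  "coarse_bounded I B \<longleftrightarrow> ideal_entourage I (B \<times> B)"

definition bornologous :: "('a::group_add) set set \<Rightarrow> ('a \<Rightarrow> real) \<Rightarrow> bool" where
  "bornologous I f \<longleftrightarrow> (\<forall>B. coarse_bounded I B \<longrightarrow> bounded (f ` B))"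

definition b_bounded :: "('a::group_add) set set \<Rightarrow> bool" where
  "b_bounded I \<longleftrightarrow> (\<forall>f. bornologous I f \<longrightarrow> bounded (range f))"

end

theory Submission
  imports Defs
begin

lemma seq_char:
  fixes S :: "'a::topological_space set"
  assumes "metrizable_space (euclidean :: 'a topology)"
  shows "compact S \<longleftrightarrow> (\<forall>\<sigma>::nat\<Rightarrow>'a. range \<sigma> \<subseteq> S
         \<longrightarrow> (\<exists>l r. l \<in> S \<and> strict_mono r \<and> (\<sigma> \<circ> r) \<longlonglongrightarrow> l))"
proof -
  obtain M d where md: "Metric_space M d" "(euclidean::'a topology) = Metric_space.mtopology M d"
    using assms unfolding metrizable_space_def by blast
  have M: "M = UNIV" using md by (metis Metric_space.topspace_mtopology topspace_euclidean)
  have "compactin (Metric_space.mtopology M d) S \<longleftrightarrow> S \<subseteq> M \<and> ((\<forall>\<sigma>::nat\<Rightarrow>'a. range \<sigma> \<subseteq> S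
         \<longrightarrow> (\<exists>l r. l \<in> S \<and> strict_mono r \<and> limitin (Metric_space.mtopology M d) (\<sigma> \<circ> r) l sequentially)))"
    by (rule Metric_space.compactin_sequentially[OF md(1)])
  then show ?thesis unfolding M md(2)[unfolded M, symmetric] by simp
qed
lemma compact_conv:
  fixes f :: "nat \<Rightarrow> 'a::topological_space"
  assumes "f \<longlonglongrightarrow> l"
  shows "compact (insert l (range f))"
proof (rule compactI)
  fix C assume C: "\<forall>t\<in>C. open t" "insert l (range f) \<subseteq> \<Union>C"
  then obtain U where U: "U \<in> C" "l \<in> U" by blast
  then have "eventually (\<lambda>n. f n \<in> U) sequentially"
    using assms C(1) by (simp add: topological_tendstoD)
  then obtain N where N: "\<And>n. n \<ge> N \<Longrightarrow> f n \<in> U" by (auto simp: eventually_sequentially)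
  have "\<forall>n. \<exists>V. V \<in> C \<and> f n \<in> V" using C(2) by blast
  then obtain V where V: "\<And>n. V n \<in> C \<and> f n \<in> V n" by metis
  show "\<exists>C'\<subseteq>C. finite C' \<and> insert l (range f) \<subseteq> \<Union>C'"
  proof (intro exI conjI)
    show "insert U (V ` {..<N}) \<subseteq> C" using U V by auto
    show "finite (insert U (V ` {..<N}))" by simp
    show "insert l (range f) \<subseteq> \<Union>(insert U (V ` {..<N}))"
    proof
      fix x assume "x \<in> insert l (range f)"
      then consider "x = l" | n where "x = f n" by auto
      then show "x \<in> \<Union>(insert U (V ` {..<N}))"
      proof cases
        case 1 then show ?thesis using U by auto
      next
        case (2 n) then show ?thesis using N V by (cases "n < N") auto
      qed
    qed
  qed
qed

lemma S_tau_ideal: "group_ideal (S_tau :: ('a::{group_add,topological_space}) set set)"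
  unfolding group_ideal_def
proof (intro conjI allI impI ballI)
  fix F :: "'a set" assume "finite F" then show "F \<in> S_tau"
    unfolding S_tau_def group_ideal_def by blast
next
  fix A B :: "'a set" assume "A \<in> S_tau" "B \<subseteq> A" then show "B \<in> S_tau"
    unfolding S_tau_def group_ideal_def by blast
next
  fix A B :: "'a set" assume "A \<in> S_tau" "B \<in> S_tau" then show "{a - b |a b. a \<in> A \<and> b \<in> B} \<in> S_tau"
    unfolding S_tau_def group_ideal_def by blast
qed

lemma S_tau_gen: "(xs::nat \<Rightarrow> 'a::{group_add,topological_space}) \<longlonglongrightarrow> x \<Longrightarrow> insert x (range xs) \<in> S_tau"
  unfolding S_tau_def by auto

lemma S_tau_sub:
  assumes "group_ideal J" "\<And>x (xs::nat \<Rightarrow> 'a). xs \<longlonglongrightarrow> x \<Longrightarrow> insert x (range xs) \<in> J"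
  shows "(S_tau :: ('a::{group_add,topological_space}) set set) \<subseteq> J"
  unfolding S_tau_def using assms by auto


lemma coarse_bounded_diff:
  fixes K :: "'a::group_add set"
  assumes "{a - b | a b. a \<in> K \<and> b \<in> K} \<in> I"
  shows "coarse_bounded I K"
  unfolding coarse_bounded_def ideal_entourage_def
proof (intro bexI[OF _ assms] subsetI)
  fix p assume "p \<in> K \<times> K"
  then obtain x y where p: "p = (x,y)" "x \<in> K" "y \<in> K" by auto
  then have "x - y \<in> {a - b | a b. a \<in> K \<and> b \<in> K}" by blast
  moreover have "x = (x - y) + y" by simp
  ultimately show "p \<in> {(x, y). \<exists>a\<in>{a - b |a b. a \<in> K \<and> b \<in> K}. x = a + y}" using p by blast
qed

lemma part1:
  assumes met: "metrizable_space (euclidean :: 'a::{topological_group_add,t2_space} topology)"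
    and comp: "compact (UNIV :: 'a set)"
  shows "b_bounded (S_tau :: 'a set set)"
  unfolding b_bounded_def
proof (intro allI impI)
  fix f :: "'a \<Rightarrow> real" assume born: "bornologous S_tau f"
  show "bounded (range f)"
  proof (rule ccontr)
    assume nb: "\<not> bounded (range f)"
    have "\<forall>n::nat. \<exists>x. \<bar>f x\<bar> > real n"
      using nb unfolding bounded_real by (auto simp: not_le)
    then obtain \<sigma> where \<sigma>: "\<And>n. \<bar>f (\<sigma> n)\<bar> > real n" by metis
    obtain l r where lr: "strict_mono r" "(\<sigma> \<circ> r) \<longlonglongrightarrow> l"
      using comp seq_char[OF met, of UNIV] by blast
    define K where "K = insert l (range (\<sigma> \<circ> r))"
    have KS: "K \<in> S_tau" unfolding K_def by (rule S_tau_gen[OF lr(2)])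
    have "{a - b | a b. a \<in> K \<and> b \<in> K} \<in> S_tau"
      using S_tau_ideal KS unfolding group_ideal_def by blast
    then have "coarse_bounded S_tau K" by (rule coarse_bounded_diff)
    then have "bounded (f ` K)" using born unfolding bornologous_def by blast
    then obtain B where B: "\<And>x. x \<in> K \<Longrightarrow> \<bar>f x\<bar> \<le> B" unfolding bounded_real by blast
    define n where "n = nat \<lceil>B\<rceil> + 1"
    have "\<sigma> (r n) \<in> K" unfolding K_def by simp
    then have "\<bar>f (\<sigma> (r n))\<bar> \<le> B" by (rule B)
    moreover have "real n \<le> real (r n)" using seq_suble[OF lr(1)] by simp
    moreover have "B < real n" unfolding n_def by linarith
    ultimately show False using \<sigma>[of "r n"] by linarith
  qed
qed

lemma not_compact:
  assumes met: "metrizable_space (euclidean :: 'a::{topological_group_add,t2_space} topology)"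
    and cnt: "countable (UNIV :: 'a set)" and inf: "infinite (UNIV :: 'a set)"
  shows "\<not> compact (UNIV :: 'a set)"
proof
  assume comp: "compact (UNIV :: 'a set)"
  have cs: "compact_space (euclidean::'a topology)" using comp by (simp add: compact_space_def)
  have X: "locally_compact_space (euclidean::'a topology) \<and> regular_space (euclidean::'a topology)"
    using compact_imp_locally_compact_space[OF cs] metrizable_imp_regular_space[OF met] by blast
  have "\<exists>x::'a. euclidean interior_of {x} \<noteq> {}"
  proof (rule ccontr)
    assume "\<not> (\<exists>x::'a. euclidean interior_of {x} \<noteq> {})"
    then have e: "\<And>x::'a. euclidean interior_of {x} = {}" by blast
    have "euclidean interior_of \<Union>((\<lambda>x::'a. {x}) ` UNIV) = {}"
    proof (rule Baire_category_alt)
      show "completely_metrizable_space (euclidean::'a topology) \<or> locally_compact_space (euclidean::'a topology) \<and> regular_space (euclidean::'a topology)"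
        using X by blast
      show "countable ((\<lambda>x::'a. {x}) ` UNIV)" using cnt by simp
      fix T assume "T \<in> (\<lambda>x::'a. {x}) ` UNIV"
      then obtain x where "T = {x}" by blast
      then show "closedin euclidean T \<and> euclidean interior_of T = {}"
        using e[of x] closed_closedin[THEN iffD1, OF closed_singleton[of x]] by simp
    qed
    moreover have "\<Union>((\<lambda>x::'a. {x}) ` UNIV) = topspace (euclidean::'a topology)" by auto
    ultimately show False by (metis interior_of_topspace UNIV_not_empty topspace_euclidean)
  qed
  then obtain x :: 'a where x: "euclidean interior_of {x} \<noteq> {}" by blast
  have "euclidean interior_of {x} \<subseteq> {x}" by (rule interior_of_subset)
  then have eqx: "euclidean interior_of {x} = {x}" using x subset_singletonD by metis
  have "openin euclidean (euclidean interior_of {x})" by (rule openin_interior_of)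
  then have "openin euclidean {x}" by (subst eqx[symmetric])
  then have ox: "open {x}" by (simp only: open_openin)
  have op: "open {y}" for y :: 'a
  proof -
    have "continuous_on UNIV (\<lambda>z::'a. (x - y) + z)" by (intro continuous_intros)
    then have "open ((\<lambda>z::'a. (x - y) + z) -` {x} \<inter> UNIV)"
      by (rule continuous_on_open_vimage[OF open_UNIV, THEN iffD1, rule_format, OF _ ox])
    moreover have "(\<lambda>z::'a. (x - y) + z) -` {x} = {y}"
    proof -
      have xy: "(x - y) + y = x" by simp
      show ?thesis
      proof (intro set_eqI iffI)
        fix z assume "z \<in> (\<lambda>z::'a. (x - y) + z) -` {x}"
        then have "(x - y) + z = (x - y) + y" using xy by simp
        then have "z = y" by (rule add_left_imp_eq)
        then show "z \<in> {y}" by simp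
      qed (use xy in simp)
    qed
    ultimately show ?thesis by simp
  qed
  have cov: "UNIV \<subseteq> \<Union>(range (\<lambda>y::'a. {y}))" by auto
  obtain T' where T': "T' \<subseteq> range (\<lambda>y::'a. {y})" "finite T'" "UNIV \<subseteq> \<Union>T'"
  proof (rule compactE[OF comp cov])
    fix B assume "B \<in> range (\<lambda>y::'a. {y})" then show "open B" using op by blast
  qed
  have "finite (\<Union>T')" using T'(1,2) by (intro finite_Union) auto
  then have "finite (UNIV :: 'a set)" using T'(3) finite_subset by blast
  then show False using inf by simp
qed
lemma J_ideal: "group_ideal {A::'a::topological_group_add set. \<exists>K. compact K \<and> A \<subseteq> K}"
  unfolding group_ideal_def
proof (intro conjI allI impI ballI)
  fix F :: "'a set" assume "finite F" then show "F \<in> {A. \<exists>K. compact K \<and> A \<subseteq> K}"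
    using finite_imp_compact by blast
next
  fix A B :: "'a set" assume "A \<in> {A. \<exists>K. compact K \<and> A \<subseteq> K}" "B \<subseteq> A"
  then show "B \<in> {A. \<exists>K. compact K \<and> A \<subseteq> K}" by blast
next
  fix A B :: "'a set" assume A: "A \<in> {A. \<exists>K. compact K \<and> A \<subseteq> K}" and B: "B \<in> {A. \<exists>K. compact K \<and> A \<subseteq> K}"
  then obtain K1 K2 where K: "compact K1" "A \<subseteq> K1" "compact K2" "B \<subseteq> K2" by blast
  have c: "continuous_on (K1 \<times> K2) (\<lambda>p::'a\<times>'a. fst p - snd p)" by (intro continuous_intros)
  have "compact ((\<lambda>p::'a\<times>'a. fst p - snd p) ` (K1 \<times> K2))"
    by (rule compact_continuous_image[OF c compact_Times[OF K(1) K(3)]])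
  moreover have "{a - b |a b. a \<in> A \<and> b \<in> B} \<subseteq> (\<lambda>p::'a\<times>'a. fst p - snd p) ` (K1 \<times> K2)"
  proof
    fix z assume "z \<in> {a - b |a b. a \<in> A \<and> b \<in> B}"
    then obtain a b where "z = a - b" "a \<in> A" "b \<in> B" by blast
    then show "z \<in> (\<lambda>p::'a\<times>'a. fst p - snd p) ` (K1 \<times> K2)" using K
      by (intro image_eqI[of _ _ "(a,b)"]) auto
  qed
  ultimately show "{a - b |a b. a \<in> A \<and> b \<in> B} \<in> {A. \<exists>K. compact K \<and> A \<subseteq> K}" by blast
qed

lemma bounded_in_compact:
  fixes B :: "'a::topological_group_add set"
  assumes "coarse_bounded S_tau B"
  shows "\<exists>K. compact K \<and> B \<subseteq> K"
proof -
  have sub: "(S_tau :: 'a set set) \<subseteq> {A. \<exists>K. compact K \<and> A \<subseteq> K}"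
    by (rule S_tau_sub[OF J_ideal]) (use compact_conv in blast)
  obtain A where A: "A \<in> S_tau" "B \<times> B \<subseteq> {(x,y). \<exists>a\<in>A. x = a + y}"
    using assms unfolding coarse_bounded_def ideal_entourage_def by blast
  obtain K where K: "compact K" "A \<subseteq> K" using sub A(1) by blast
  show ?thesis
  proof (cases "B = {}")
    case True then show ?thesis by blast
  next
    case False
    then obtain b0 where b0: "b0 \<in> B" by blast
    have c: "continuous_on K (\<lambda>a. a + b0)" by (intro continuous_intros)
    have "B \<subseteq> (\<lambda>a. a + b0) ` K"
    proof
      fix x assume "x \<in> B"
      then have "(x, b0) \<in> B \<times> B" using b0 by blast
      then obtain a where "a \<in> A" "x = a + b0" using A(2) by blast
      then show "x \<in> (\<lambda>a. a + b0) ` K" using K(2) by (intro image_eqI[of _ _ a]) auto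
    qed
    then show ?thesis using compact_continuous_image[OF c K(1)] by (intro exI[of _ "(\<lambda>a. a + b0) ` K"] conjI)
  qed
qed


lemma part2:
  assumes met: "metrizable_space (euclidean :: 'a::{topological_group_add,t2_space} topology)"
    and cnt: "countable (UNIV :: 'a set)" and inf: "infinite (UNIV :: 'a set)"
  shows "\<not> b_bounded (S_tau :: 'a set set)"
proof
  assume bb: "b_bounded (S_tau :: 'a set set)"
  have "\<not> compact (UNIV :: 'a set)" by (rule not_compact[OF met cnt inf])
  then have "\<not> (\<forall>\<sigma>::nat\<Rightarrow>'a. range \<sigma> \<subseteq> UNIV
         \<longrightarrow> (\<exists>l r. l \<in> UNIV \<and> strict_mono r \<and> (\<sigma> \<circ> r) \<longlonglongrightarrow> l))"
    unfolding seq_char[OF met] .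
  then obtain \<sigma> :: "nat \<Rightarrow> 'a" where \<sigma>: "\<not> (\<exists>l r. strict_mono r \<and> (\<sigma> \<circ> r) \<longlonglongrightarrow> l)"
    by blast
  define f where "f y = (if y \<in> range \<sigma> then real (LEAST n. \<sigma> n = y) else 0)" for y
  have least: "\<sigma> (LEAST k. \<sigma> k = \<sigma> n) = \<sigma> n" for n
    by (rule LeastI[where P="\<lambda>k. \<sigma> k = \<sigma> n" and k=n]) (rule refl)
  have born: "bornologous S_tau f"
    unfolding bornologous_def
  proof (intro allI impI)
    fix B :: "'a set" assume "coarse_bounded S_tau B"
    then obtain K where K: "compact K" "B \<subseteq> K" by (rule bounded_in_compact[THEN exE]) blast
    define M where "M = {n. \<sigma> n \<in> K}"
    have finM: "finite M"
    proof (rule ccontr)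
      assume "infinite M"
      then obtain r :: "nat \<Rightarrow> nat" where r: "strict_mono r" "\<And>n. r n \<in> M"
        using infinite_enumerate by blast
      have "\<And>n. \<sigma> (r n) \<in> K" using r(2) unfolding M_def by simp
      then have rK: "range (\<sigma> \<circ> r) \<subseteq> K" by auto
      have sc: "\<forall>\<sigma>'::nat\<Rightarrow>'a. range \<sigma>' \<subseteq> K \<longrightarrow> (\<exists>l r. l \<in> K \<and> strict_mono r \<and> (\<sigma>' \<circ> r) \<longlonglongrightarrow> l)"
        using seq_char[OF met, of K] K(1) by (rule iffD1)
      obtain l r2 where l: "strict_mono r2" "((\<sigma> \<circ> r) \<circ> r2) \<longlonglongrightarrow> l"
        using sc[rule_format, OF rK] by blast
      have sm: "strict_mono (r \<circ> r2)" using r(1) l(1) by (rule strict_mono_o)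
      have "\<sigma> \<circ> (r \<circ> r2) = (\<sigma> \<circ> r) \<circ> r2" by (simp only: o_assoc)
      then have "(\<sigma> \<circ> (r \<circ> r2)) \<longlonglongrightarrow> l" using l(2) by (simp only:)
      then show False using \<sigma> sm by blast
    qed
    have "f ` B \<subseteq> insert 0 (real ` M)"
    proof
      fix z assume "z \<in> f ` B"
      then obtain y where y: "y \<in> B" "z = f y" by blast
      show "z \<in> insert 0 (real ` M)"
      proof (cases "y \<in> range \<sigma>")
        case True
        then obtain n where n: "y = \<sigma> n" by blast
        have "(LEAST k. \<sigma> k = y) \<in> M" using least[of n] n y(1) K(2) unfolding M_def by auto
        then show ?thesis using y(2) True unfolding f_def by simp
      next
        case False then show ?thesis using y(2) unfolding f_def by simp
      qed
    qed
    moreover have "bounded (insert 0 (real ` M))" using finM by (intro finite_imp_bounded) simp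
    ultimately show "bounded (f ` B)" using bounded_subset by blast
  qed
  then have "bounded (range f)" using bb unfolding b_bounded_def by blast
  then obtain Bd where Bd: "\<And>x. \<bar>f x\<bar> \<le> Bd" unfolding bounded_real by blast
  define N where "N = nat \<lceil>Bd\<rceil> + 1"
  have "\<exists>n. \<sigma> n \<notin> \<sigma> ` {..N}"
  proof (rule ccontr)
    assume "\<not> (\<exists>n. \<sigma> n \<notin> \<sigma> ` {..N})"
    then have "range \<sigma> \<subseteq> \<sigma> ` {..N}" by blast
    then have "finite (\<sigma> ` UNIV)" using finite_subset by blast
    then obtain a where "infinite {x \<in> UNIV. \<sigma> x = \<sigma> a}"
      using pigeonhole_infinite[of UNIV \<sigma>] by blast
    then obtain r :: "nat \<Rightarrow> nat" where r: "strict_mono r" "\<And>n. r n \<in> {x \<in> UNIV. \<sigma> x = \<sigma> a}"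
      using infinite_enumerate by blast
    have "(\<sigma> \<circ> r) = (\<lambda>_. \<sigma> a)" using r(2) by auto
    then have "(\<sigma> \<circ> r) \<longlonglongrightarrow> \<sigma> a" by simp
    then show False using \<sigma> r(1) by blast
  qed
  then obtain n where n: "\<sigma> n \<notin> \<sigma> ` {..N}" by blast
  define m where "m = (LEAST k. \<sigma> k = \<sigma> n)"
  have "\<sigma> m = \<sigma> n" unfolding m_def by (rule least)
  then have "\<not> m \<le> N" using n by (metis atMost_iff image_eqI)
  then have "f (\<sigma> n) = real m" unfolding f_def m_def by simp
  moreover have "Bd < real N" unfolding N_def by linarith
  ultimately show False using Bd[of "\<sigma> n"] \<open>\<not> m \<le> N\<close> by linarith
qed


theorem theorem9:
  fixes G :: "'a::{topological_group_add, t2_space} itself"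
  shows "(metrizable_space (euclidean :: 'a topology) \<and> compact (UNIV :: 'a set)
            \<longrightarrow> b_bounded (S_tau :: 'a set set))
       \<and> (countable (UNIV :: 'a set) \<and> infinite (UNIV :: 'a set)
            \<and> metrizable_space (euclidean :: 'a topology)
            \<longrightarrow> \<not> b_bounded (S_tau :: 'a set set))"
  using part1[where 'a='a] part2[where 'a='a] by blast

end
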